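(* Let $-2<k<2$ and $(x_0,y_0,z_0)\in E_k$. If the $\Gamma$-orbit of $(x_0,y_0,z_0)$ is infinite, then it is dense in $E_k$.
   Context: $M$ is a torus with one boundary component; $\pi_1(M)$ is free on $X,Y$, $K=XYX^{-1}Y^{-1}$. $E=\operatorname{Hom}(\pi_1(M),\mathrm{SU}(2))/\mathrm{SU}(2)$ is identified via $[\sigma]\mapsto(\operatorname{tr}\sigma(X),\operatorname{tr}\sigma(Y),\operatorname{tr}\sigma(XY))$ with $\{(x,y,z)\in[-2,2]^3:-2\le x^2+y^2+z^2-xyz-2\le2\}$, and $E_k=\{(x,y,z)\in E:x^2+y^2+z^2-xyz-2=k\}$, with the topology induced from $\mathbb{R}^3$. $\Gamma$ is the mapping class group of $M$ fixing $\partial M$; it acts on $E$ and is generated by $\tau_X(x,y,z)=(x,z,xz-y)$ and $\tau_Y(x,y,z)=(z,y,yz-x)$, which preserve each $E_k$. *)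

theory Defs
  imports "HOL-Analysis.Analysis"
begin

text \<open>Points of E are represented by their trace coordinates (x,y,z) in R^3,
  with the Euclidean (product) topology on real \<times> real \<times> real.\<close>

definition kappa :: "real \<times> real \<times> real \<Rightarrow> real" where
  "kappa p = (case p of (x, y, z) \<Rightarrow> x^2 + y^2 + z^2 - x*y*z - 2)"

definition E :: "(real \<times> real \<times> real) set" where
  "E = {(x, y, z). x \<in> {-2..2} \<and> y \<in> {-2..2} \<and> z \<in> {-2..2}
                   \<and> -2 \<le> kappa (x, y, z) \<and> kappa (x, y, z) \<le> 2}"

definition E_k :: "real \<Rightarrow> (real \<times> real \<times> real) set" where
  "E_k k = {p \<in> E. kappa p = k}"

definition tauX :: "real \<times> real \<times> real \<Rightarrow> real \<times> real \<times> real" where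
  "tauX p = (case p of (x, y, z) \<Rightarrow> (x, z, x*z - y))"

definition tauY :: "real \<times> real \<times> real \<Rightarrow> real \<times> real \<times> real" where
  "tauY p = (case p of (x, y, z) \<Rightarrow> (z, y, y*z - x))"

definition tauX_inv :: "real \<times> real \<times> real \<Rightarrow> real \<times> real \<times> real" where
  "tauX_inv p = (case p of (x, a, b) \<Rightarrow> (x, x*a - b, a))"

definition tauY_inv :: "real \<times> real \<times> real \<Rightarrow> real \<times> real \<times> real" where
  "tauY_inv p = (case p of (a, y, b) \<Rightarrow> (y*a - b, y, a))"

inductive_set Gamma_orbit :: "real \<times> real \<times> real \<Rightarrow> (real \<times> real \<times> real) set"
  for p where
  base: "p \<in> Gamma_orbit p"
| stepX: "q \<in> Gamma_orbit p \<Longrightarrow> tauX q \<in> Gamma_orbit p"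
| stepY: "q \<in> Gamma_orbit p \<Longrightarrow> tauY q \<in> Gamma_orbit p"
| stepXi: "q \<in> Gamma_orbit p \<Longrightarrow> tauX_inv q \<in> Gamma_orbit p"
| stepYi: "q \<in> Gamma_orbit p \<Longrightarrow> tauY_inv q \<in> Gamma_orbit p"

lemma tauX_inv_tauX: "tauX_inv (tauX p) = p" and tauX_tauX_inv: "tauX (tauX_inv p) = p"
  and tauY_inv_tauY: "tauY_inv (tauY p) = p" and tauY_tauY_inv: "tauY (tauY_inv p) = p"
  by (cases p; auto simp: tauX_def tauX_inv_def tauY_def tauY_inv_def)+

end

theory Submission
  imports Defs "HOL-Analysis.Kronecker_Approximation_Theorem"
begin

definition sw :: "real \<times> real \<times> real \<Rightarrow> real \<times> real \<times> real" where
  "sw p = (fst (snd p), fst p, snd (snd p))"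
definition Rk :: "real \<Rightarrow> real \<Rightarrow> real" where
  "Rk k x = sqrt (k + 2 - x^2) / sqrt (1 - (x/2)^2)"
definition th :: "real \<Rightarrow> real" where "th x = arccos (x/2)"
definition P :: "real \<Rightarrow> real \<Rightarrow> real \<Rightarrow> real \<times> real \<times> real" where
  "P k x t = (x, Rk k x * sin t, Rk k x * sin (t + th x))"

lemma kappa_simp: "kappa (x,y,z) = x^2+y^2+z^2-x*y*z-2"
  by (simp add: kappa_def)

lemma Ek_iff: "(x,y,z) \<in> E_k k \<longleftrightarrow> (-2 \<le> x \<and> x \<le> 2 \<and> -2 \<le> y \<and> y \<le> 2 \<and> -2 \<le> z \<and> z \<le> 2
   \<and> -2 \<le> k \<and> k \<le> 2 \<and> x^2+y^2+z^2-x*y*z-2 = k)"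
  by (auto simp: E_k_def E_def kappa_simp)

lemma sw_sw[simp]: "sw (sw p) = p" by (simp add: sw_def)
lemma sw_simp[simp]: "sw (x,y,z) = (y,x,z)" by (simp add: sw_def)
lemma tauY_sw: "tauY p = sw (tauX (sw p))"
  by (cases p) (auto simp: tauX_def tauY_def)
lemma tauYi_sw: "tauY_inv p = sw (tauX_inv (sw p))"
  by (cases p) (auto simp: tauX_inv_def tauY_inv_def)
lemma sw_Ek: "sw p \<in> E_k k \<longleftrightarrow> p \<in> E_k k"
  by (cases p) (auto simp: Ek_iff algebra_simps)

lemma Q_ge:
  fixes x y z :: real
  assumes "\<bar>x\<bar> \<le> 2"
  shows "(1 - \<bar>x\<bar>/2) * (y^2+z^2) \<le> y^2+z^2-x*y*z"
proof -
  have "0 \<le> (\<bar>y\<bar> - \<bar>z\<bar>)^2" by simp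
  hence h: "2*\<bar>y*z\<bar> \<le> y^2+z^2" by (simp add: power2_eq_square algebra_simps abs_mult)
  have "x*y*z \<le> \<bar>x*(y*z)\<bar>" by (simp add: mult.assoc)
  also have "\<dots> = \<bar>x\<bar> * \<bar>y*z\<bar>" by (simp add: abs_mult)
  also have "\<dots> \<le> \<bar>x\<bar> * ((y^2+z^2)/2)" using h by (intro mult_left_mono) auto
  finally show ?thesis by (simp add: algebra_simps)
qed

lemma Ek_bound_x:
  assumes "(x,y,z) \<in> E_k k"
  shows "x^2 \<le> k + 2"
proof -
  have "\<bar>x\<bar> \<le> 2" using assms by (auto simp: Ek_iff)
  have "0 \<le> (1 - \<bar>x\<bar>/2) * (y^2+z^2)" using \<open>\<bar>x\<bar> \<le> 2\<close> by (intro mult_nonneg_nonneg) auto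
  with Q_ge[OF \<open>\<bar>x\<bar> \<le> 2\<close>, of y z] have "0 \<le> y^2+z^2-x*y*z" by linarith
  thus ?thesis using assms by (auto simp: Ek_iff)
qed

lemma Ek_bounds:
  assumes "(x,y,z) \<in> E_k k"
  shows "x^2 \<le> k + 2" "y^2 \<le> k+2" "z^2 \<le> k+2"
proof -
  show "x^2 \<le> k + 2" using Ek_bound_x[OF assms] .
  have "(y,x,z) \<in> E_k k" using assms by (auto simp: Ek_iff algebra_simps)
  from Ek_bound_x[OF this] show "y^2 \<le> k+2" .
  have "(z,x,y) \<in> E_k k" using assms by (auto simp: Ek_iff algebra_simps)
  from Ek_bound_x[OF this] show "z^2 \<le> k+2" .
qed

lemma sq_le_abs: "(x::real)^2 \<le> c \<Longrightarrow> \<bar>x\<bar> \<le> sqrt c"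
  by (metis real_sqrt_abs real_sqrt_le_mono)

lemma th_facts:
  assumes "\<bar>x\<bar> < 2"
  shows "cos (th x) = x/2" "sin (th x) = sqrt (1 - (x/2)^2)" "sin (th x) > 0"
    "0 < th x" "th x < pi"
proof -
  have a: "-1 \<le> x/2" "x/2 \<le> 1" "-1 < x/2" "x/2 < 1" using assms by auto
  show "cos (th x) = x/2" using a by (simp add: th_def cos_arccos)
  show "sin (th x) = sqrt (1 - (x/2)^2)" using a by (simp add: th_def sin_arccos)
  have "(x/2)^2 < 1" using a by (simp add: abs_square_less_1)
  then show "sin (th x) > 0" using a by (simp add: th_def sin_arccos)
  show "0 < th x" "th x < pi" using a unfolding th_def
    by (simp_all add: arccos_lt_bounded)
qed

lemma trig_id: "sin (t::real) ^2 + sin (t + a)^2 - 2 * cos a * sin t * sin (t + a) = sin a ^2"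
proof -
  have "sin t ^2 + sin (t + a)^2 - 2 * cos a * sin t * sin (t + a)
     = sin t^2 * (1 - cos a^2) + cos t^2 * sin a^2"
    by (simp add: sin_add power2_eq_square algebra_simps)
  also have "\<dots> = sin a^2 * (sin t^2 + cos t^2)"
    by (simp add: sin_squared_eq algebra_simps)
  finally show ?thesis by simp
qed

lemma P_in:
  assumes "-2 < k" "k < 2" "x^2 \<le> k + 2"
  shows "P k x t \<in> E_k k"
proof -
  have k2: "k + 2 < 4" using assms by simp
  have x2: "x^2 < 4" using assms by simp
  hence ax: "\<bar>x\<bar> < 2" by (intro power2_less_imp_less[of "\<bar>x\<bar>"]) auto
  note tf = th_facts[OF ax]
  define R where "R = Rk k x"
  have R2: "R^2 * sin (th x)^2 = k + 2 - x^2"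
    using tf assms unfolding R_def Rk_def by (simp add: power_divide)
  have R2': "R^2 \<le> k + 2"
  proof -
    have "R^2 = (k+2-x^2) / (1 - (x/2)^2)" unfolding R_def Rk_def using assms x2
      by (simp add: power_divide)
    also have "\<dots> \<le> k + 2"
    proof -
      have d: "0 < 1 - (x/2)^2" using x2 by (simp add: power_divide)
      have "(k+2) * x^2 \<le> 4 * x^2" using k2 by (intro mult_right_mono) auto
      hence "k + 2 - x^2 \<le> (k+2) * (1 - (x/2)^2)" by (simp add: power_divide algebra_simps)
      thus ?thesis using d by (simp add: divide_le_eq)
    qed
    finally show ?thesis .
  qed
  have bnd: "\<bar>R * sin u\<bar> \<le> 2" for u
  proof -
    have "sin u ^2 \<le> 1" by (simp add: abs_square_le_1)
    hence "R^2 * sin u^2 \<le> R^2 * 1" by (intro mult_left_mono) auto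
    hence "(R * sin u)^2 \<le> R^2" by (simp add: power_mult_distrib)
    hence "(R * sin u)^2 \<le> 4" using R2' k2 by simp
    hence "\<bar>R * sin u\<bar>^2 \<le> 2^2" by simp
    thus ?thesis by (rule power2_le_imp_le) auto
  qed
  have "x^2 + (R * sin t)^2 + (R * sin (t + th x))^2 - x * (R * sin t) * (R * sin (t + th x)) - 2
      = x^2 + R^2 * (sin t ^2 + sin (t + th x)^2 - 2 * cos (th x) * sin t * sin (t + th x)) - 2"
    using tf by (simp add: power_mult_distrib algebra_simps power2_eq_square)
  also have "\<dots> = k" using R2 by (simp add: trig_id)
  finally have "x^2 + (R * sin t)^2 + (R * sin (t + th x))^2 - x * (R * sin t) * (R * sin (t + th x)) - 2 = k" .
  moreover have "-2 \<le> x" "x \<le> 2" using ax by auto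
  moreover have "-2 \<le> R * sin t" "R * sin t \<le> 2" using bnd[of t] by (simp_all add: abs_le_iff)
  moreover have "-2 \<le> R * sin (t + th x)" "R * sin (t + th x) \<le> 2" using bnd[of "t + th x"] by (simp_all add: abs_le_iff)
  moreover have "-2 \<le> k" "k \<le> 2" using assms by auto
  ultimately show ?thesis unfolding P_def R_def[symmetric]
    by (subst Ek_iff) (intro conjI; assumption)
qed

lemma Rk_sq: assumes "\<bar>x\<bar> < 2" shows "Rk k x * sin (th x) = sqrt (k + 2 - x^2)"
  using th_facts[OF assms] unfolding Rk_def by simp

lemma Ek_abs_lt2: assumes "(x,y,z) \<in> E_k k" "k < 2" shows "\<bar>x\<bar> < 2"
proof -
  have "x^2 < 2^2" using Ek_bounds(1)[OF assms(1)] assms(2) by simp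
  thus ?thesis by (intro power2_less_imp_less[of "\<bar>x\<bar>"]) auto
qed

lemma P_surj:
  assumes p: "(x,y,z) \<in> E_k k" and k: "-2 < k" "k < 2"
  shows "\<exists>t. (x,y,z) = P k x t"
proof -
  have ax: "\<bar>x\<bar> < 2" using Ek_abs_lt2[OF p k(2)] .
  note tf = th_facts[OF ax]
  have eq: "y^2+z^2-x*y*z = k + 2 - x^2" using p by (auto simp: Ek_iff)
  have x2: "x^2 \<le> k + 2" using Ek_bounds(1)[OF p] .
  define R where "R = Rk k x"
  define s where "s = sin (th x)"
  define c where "c = cos (th x)"
  have s0: "s > 0" using tf s_def by simp
  have cx: "x = 2 * c" using tf c_def by simp
  have sc: "s^2 + c^2 = 1" unfolding s_def c_def by simp
  have Rs: "R * s = sqrt (k + 2 - x^2)" using Rk_sq[OF ax] R_def s_def by simp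
  hence Rs2: "(R * s)^2 = k + 2 - x^2" using x2 by simp
  show ?thesis
  proof (cases "x^2 = k + 2")
    case True
    hence "R = 0" using Rs s0 by simp
    have "(1 - \<bar>x\<bar>/2) * (y^2+z^2) \<le> 0" using Q_ge[of x y z] ax eq True by simp
    moreover have "1 - \<bar>x\<bar>/2 > 0" using ax by simp
    ultimately have "y^2 + z^2 \<le> 0" by (simp add: mult_le_0_iff)
    hence "y = 0" "z = 0" by (simp_all add: sum_power2_le_zero_iff)
    thus ?thesis using \<open>R = 0\<close> unfolding P_def R_def by auto
  next
    case False
    hence "k + 2 - x^2 > 0" using x2 by simp
    hence "R * s > 0" using Rs by simp
    hence R0: "R > 0" using s0 by (simp add: zero_less_mult_iff)
    define u where "u = y / R"
    define v where "v = (z - y * c) / (R * s)"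
    have "(R * s)^2 * (v^2 + u^2) = (z - y*c)^2 + y^2 * s^2"
      unfolding u_def v_def using R0 s0 by (simp add: power_divide field_simps)
    also have "\<dots> = y^2 * (s^2 + c^2) + z^2 - 2 * c * y * z" by (simp add: power2_eq_square algebra_simps)
    also have "\<dots> = (R * s)^2" using sc eq cx Rs2 by (simp add: algebra_simps)
    finally have "v^2 + u^2 = 1" using R0 s0 by simp
    then obtain t where t: "v = cos t" "u = sin t" by (rule sincos_total_2pi)
    have "R * sin t = y" using t R0 u_def by (simp add: field_simps)
    moreover have "R * sin (t + th x) = z"
    proof -
      have "R * sin (t + th x) = R * sin t * c + (R * s) * cos t"
        by (simp add: sin_add s_def c_def algebra_simps)
      also have "\<dots> = z" using t R0 s0 u_def v_def by (simp add: field_simps)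
      finally show ?thesis .
    qed
    ultimately show ?thesis unfolding P_def R_def by auto
  qed
qed

lemma sin_2th: assumes "\<bar>x\<bar> < 2"
  shows "sin (t + th x + th x) = x * sin (t + th x) - sin t"
    and "sin (t - th x) = x * sin t - sin (t + th x)"
proof -
  note tf = th_facts[OF assms]
  have "sin ((t + th x) + th x) = 2 * cos (th x) * sin (t + th x) - sin ((t + th x) - th x)"
    by (simp only: sin_add sin_diff) (simp add: algebra_simps)
  then show "sin (t + th x + th x) = x * sin (t + th x) - sin t" using tf by simp
  have "sin (t - th x) = 2 * cos (th x) * sin t - sin (t + th x)"
    by (simp only: sin_add sin_diff) (simp add: algebra_simps)
  thus "sin (t - th x) = x * sin t - sin (t + th x)" using tf by simp
qed

lemma P_tauX: assumes "\<bar>x\<bar> < 2"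
  shows "tauX (P k x t) = P k x (t + th x)" "tauX_inv (P k x t) = P k x (t - th x)"
proof -
  show "tauX (P k x t) = P k x (t + th x)"
    unfolding P_def tauX_def prod.case sin_2th(1)[OF assms, of t] by (simp add: right_diff_distrib mult.left_commute)
  show "tauX_inv (P k x t) = P k x (t - th x)"
    unfolding P_def tauX_inv_def prod.case sin_2th(2)[OF assms, of t] by (simp add: right_diff_distrib mult.left_commute)
qed

lemma P_period: "P k x (t + 2 * pi * of_int j) = P k x t"
proof -
  have "sin (t + 2 * pi * of_int j) = sin t" "sin (t + 2 * pi * of_int j + th x) = sin (t + th x)"
    using sin_cos_eq_iff by (metis add.commute add.left_commute)+
  thus ?thesis unfolding P_def by simp
qed

lemma tauX_Ek: assumes "p \<in> E_k k" "-2 < k" "k < 2"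
  shows "tauX p \<in> E_k k" "tauX_inv p \<in> E_k k"
proof -
  obtain x y z where p: "p = (x,y,z)" by (cases p)
  have ax: "\<bar>x\<bar> < 2" using Ek_abs_lt2 assms p by blast
  obtain t where t: "p = P k x t" using P_surj assms p by blast
  have x2: "x^2 \<le> k + 2" using Ek_bounds(1) assms p by blast
  show "tauX p \<in> E_k k" using P_tauX(1)[OF ax] P_in[OF assms(2,3) x2] t by simp
  show "tauX_inv p \<in> E_k k" using P_tauX(2)[OF ax] P_in[OF assms(2,3) x2] t by simp
qed

lemma tauY_Ek: assumes "p \<in> E_k k" "-2 < k" "k < 2"
  shows "tauY p \<in> E_k k" "tauY_inv p \<in> E_k k"
  using tauX_Ek[of "sw p" k] assms sw_Ek by (simp_all add: tauY_sw tauYi_sw)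

lemma dirichlet_dense:
  fixes \<alpha> u :: real and N :: nat
  assumes N: "N > 0" and nz: "\<And>n::int. 1 \<le> n \<Longrightarrow> n \<le> int N \<Longrightarrow> of_int n * \<alpha> \<notin> \<int>"
  shows "\<exists>m j :: int. \<bar>of_int m * \<alpha> - of_int j - u\<bar> < 1 / N"
proof -
  obtain h k0 where hk: "0 < k0" "k0 \<le> int N" "\<bar>of_int k0 * \<alpha> - of_int h\<bar> < 1/N"
    using Dirichlet_approx[OF N] by blast
  define \<delta> where "\<delta> = of_int k0 * \<alpha> - of_int h"
  have "\<delta> \<noteq> 0"
  proof
    assume "\<delta> = 0"
    hence "of_int k0 * \<alpha> = of_int h" unfolding \<delta>_def by simp
    hence "of_int k0 * \<alpha> \<in> \<int>" by simp
    thus False using nz[of k0] hk by simp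
  qed
  define m' where "m' = \<lfloor>u / \<delta>\<rfloor>"
  have "\<bar>of_int m' - u / \<delta>\<bar> < 1" unfolding m'_def
    using of_int_floor_le[of "u/\<delta>"] real_of_int_floor_add_one_gt[of "u/\<delta>"] by linarith
  hence "\<bar>\<delta>\<bar> * \<bar>of_int m' - u / \<delta>\<bar> < \<bar>\<delta>\<bar> * 1"
    using \<open>\<delta> \<noteq> 0\<close> by (intro mult_strict_left_mono) auto
  hence "\<bar>of_int m' * \<delta> - u\<bar> < \<bar>\<delta>\<bar>"
    using \<open>\<delta> \<noteq> 0\<close> by (simp add: abs_mult[symmetric] algebra_simps)
  also have "\<bar>\<delta>\<bar> < 1/N" using hk \<delta>_def by simp
  finally have *: "\<bar>of_int m' * \<delta> - u\<bar> < 1/N" .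
  have eq: "of_int (m' * k0) * \<alpha> - of_int (m' * h) - u = of_int m' * \<delta> - u"
    unfolding \<delta>_def by (simp add: algebra_simps)
  have "\<bar>of_int (m' * k0) * \<alpha> - of_int (m' * h) - u\<bar> < 1 / N" unfolding eq by (rule *)
  thus ?thesis by blast
qed

definition badset :: "nat \<Rightarrow> real set" where
  "badset N = (\<lambda>(n,j). 2 * cos (2 * pi * real j / real n)) ` ({1..N} \<times> {0..N})"

lemma finite_badset: "finite (badset N)" unfolding badset_def by simp

lemma not_bad:
  assumes ax: "\<bar>x\<bar> < 2" and nb: "x \<notin> badset N"
    and n: "1 \<le> n" "n \<le> int N"
  shows "of_int n * (th x / (2*pi)) \<notin> \<int>"
proof
  assume "of_int n * (th x / (2*pi)) \<in> \<int>"
  then obtain j where j: "of_int n * (th x / (2*pi)) = of_int j" by (auto elim: Ints_cases)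
  note tf = th_facts[OF ax]
  have n0: "(0::real) < of_int n" using n by simp
  have "0 < of_int n * (th x / (2*pi))" using tf n0 by simp
  hence j0: "0 \<le> j" using j by simp
  have "th x / (2*pi) \<le> 1/2" using tf by (simp add: field_simps)
  hence "of_int n * (th x / (2*pi)) \<le> of_int n * (1/2)"
    using n0 by (intro mult_left_mono) auto
  hence "real_of_int j \<le> of_int n * (1/2)" using j by linarith
  hence jN: "j \<le> int N" using n by linarith
  have thx: "th x = 2 * pi * real (nat j) / real (nat n)"
    using j n0 j0 by (simp add: field_simps)
  have "x = 2 * cos (th x)" using tf by simp
  also have "\<dots> \<in> badset N" unfolding badset_def thx
    by (rule image_eqI[where x="(nat n, nat j)"]) (use n jN j0 in auto)
  finally show False using nb by simp
qed

lemma orbit_int: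
  assumes inv: "\<forall>q\<in>C. tauX q \<in> C \<and> tauX_inv q \<in> C" and ax: "\<bar>x\<bar> < 2"
    and q: "P k x t0 \<in> C"
  shows "P k x (t0 + of_int m * th x) \<in> C"
proof -
  have pos: "P k x (t0 + real n * th x) \<in> C" for n :: nat
  proof (induction n)
    case 0 then show ?case using q by simp
  next
    case (Suc n)
    have "tauX (P k x (t0 + real n * th x)) \<in> C" using inv Suc by blast
    thus ?case using P_tauX(1)[OF ax] by (simp add: algebra_simps)
  qed
  have neg: "P k x (t0 - real n * th x) \<in> C" for n :: nat
  proof (induction n)
    case 0 then show ?case using q by simp
  next
    case (Suc n)
    have "tauX_inv (P k x (t0 - real n * th x)) \<in> C" using inv Suc by blast
    thus ?case using P_tauX(2)[OF ax] by (simp add: algebra_simps)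
  qed
  show ?thesis
  proof (cases "m \<ge> 0")
    case True
    then show ?thesis using pos[of "nat m"] by simp
  next
    case False
    then show ?thesis using neg[of "nat (-m)"] by simp
  qed
qed

lemma P_cont:
  assumes "\<bar>a\<bar> < 2"
  shows "isCont (\<lambda>z. P k (fst z) (snd z)) (a, t)"
proof -
  let ?S = "{-2<..<2::real} \<times> (UNIV :: real set)"
  have "open ?S" by (intro open_Times) auto
  have cont: "continuous_on ?S (\<lambda>z. P k (fst z) (snd z))"
  proof -
    have d: "\<forall>z\<in>?S. sqrt (1 - (fst z / 2)^2) \<noteq> 0"
    proof
      fix z assume "z \<in> ?S"
      hence "\<bar>fst z\<bar> < 2" by auto
      thus "sqrt (1 - (fst z / 2)^2) \<noteq> 0" using th_facts(2,3)[of "fst z"] by auto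
    qed
    have r: "\<forall>z\<in>?S. -1 \<le> fst z / 2 \<and> fst z / 2 \<le> 1" by auto
    show ?thesis unfolding P_def Rk_def th_def
      using d r by (intro continuous_intros) auto
  qed
  have mem: "(a,t) \<in> ?S" using assms by auto
  have "\<forall>x\<in>?S. isCont (\<lambda>z. P k (fst z) (snd z)) x"
    by (rule continuous_on_eq_continuous_at[OF \<open>open ?S\<close>, THEN iffD1, OF cont])
  from bspec[OF this mem] show ?thesis .
qed

lemma islimpt_diff_finite:
  fixes a :: real
  assumes "a islimpt X" "finite B" shows "a islimpt (X - B)"
proof -
  have "a islimpt ((X - B) \<union> B)" by (rule islimpt_subset[OF assms(1)]) auto
  thus ?thesis unfolding islimpt_Un using islimpt_finite[OF assms(2)] by simp
qed

lemma slice_in: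
  assumes k: "-2 < k" "k < 2" and cl: "closed C" and sub: "C \<subseteq> E_k k"
    and inv: "\<forall>q\<in>C. tauX q \<in> C \<and> tauX_inv q \<in> C"
    and a: "\<bar>a\<bar> < 2" and lim: "a islimpt (fst ` C)"
  shows "P k a t \<in> C"
proof -
  have "P k a t \<in> closure C"
    unfolding closure_approachable
  proof (intro allI impI)
    fix e :: real assume e: "e > 0"
    obtain d where d: "d > 0" and dP: "\<And>z. dist z (a,t) < d \<Longrightarrow> dist (P k (fst z) (snd z)) (P k a t) < e"
      using P_cont[OF a, where k=k and t=t] e unfolding continuous_at_eps_delta by fastforce
    obtain N :: nat where N: "4 * pi / d < real N" using reals_Archimedean2 by blast
    have N0: "N > 0" using N d by (cases N) (auto simp: field_simps)
    have Nd: "2 * pi / real N < d / 2" using N d N0 pi_gt_zero by (simp add: field_simps)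
    have "a islimpt (fst ` C - badset N)" using islimpt_diff_finite[OF lim finite_badset] .
    then obtain x where x: "x \<in> fst ` C - badset N" "dist x a < d/2"
      unfolding islimpt_approachable using half_gt_zero[OF d] by blast
    then obtain q0 where "q0 \<in> C" "fst q0 = x" by blast
    then obtain y z where q: "(x,y,z) \<in> C" by (metis prod.collapse)
    have qE: "(x,y,z) \<in> E_k k" using q sub by blast
    have ax: "\<bar>x\<bar> < 2" using Ek_abs_lt2[OF qE k(2)] .
    obtain t0 where t0: "(x,y,z) = P k x t0" using P_surj[OF qE k] by blast
    define \<alpha> where "\<alpha> = th x / (2*pi)"
    have xnb: "x \<notin> badset N" using x(1) by simp
    have nz: "\<And>n::int. 1 \<le> n \<Longrightarrow> n \<le> int N \<Longrightarrow> of_int n * \<alpha> \<notin> \<int>"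
      unfolding \<alpha>_def by (rule not_bad[OF ax xnb])
    obtain m j :: int where mj: "\<bar>of_int m * \<alpha> - of_int j - (t - t0)/(2*pi)\<bar> < 1/N"
      using dirichlet_dense[OF N0 nz, of "(t - t0)/(2*pi)"] by blast
    define t' where "t' = t0 + of_int m * th x + 2 * pi * of_int (-j)"
    have "\<bar>t' - t\<bar> = 2 * pi * \<bar>of_int m * \<alpha> - of_int j - (t - t0)/(2*pi)\<bar>"
    proof -
      have "t' - t = 2 * pi * (of_int m * \<alpha> - of_int j - (t - t0)/(2*pi))"
        unfolding t'_def \<alpha>_def by (simp add: field_simps)
      thus ?thesis by (simp add: abs_mult)
    qed
    also have "\<dots> < 2 * pi * (1/N)" using mj by (intro mult_strict_left_mono) auto
    also have "\<dots> < d/2" using Nd by simp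
    finally have tt: "\<bar>t' - t\<bar> < d/2" .
    have "P k x t0 \<in> C" using q t0 by simp
    hence "P k x (t0 + of_int m * th x) \<in> C" by (rule orbit_int[OF inv ax])
    moreover have "P k x t' = P k x (t0 + of_int m * th x)" unfolding t'_def by (rule P_period)
    ultimately have inC: "P k x t' \<in> C" by simp
    have "dist (x, t') (a, t) \<le> \<bar>x - a\<bar> + \<bar>t' - t\<bar>"
      unfolding dist_Pair_Pair dist_real_def power2_abs by (rule sqrt_sum_squares_le_sum_abs)
    also have "\<dots> < d" using x(2) tt by (simp add: dist_real_def)
    finally have "dist (P k x t') (P k a t) < e" using dP[of "(x,t')"] by simp
    thus "\<exists>y\<in>C. dist y (P k a t) < e" using inC by blast
  qed
  thus ?thesis using cl by simp
qed

lemma fin_x: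
  assumes k: "-2 < k" "k < 2" and sub: "Ob \<subseteq> E_k k"
    and inv: "\<forall>q\<in>Ob. tauY q \<in> Ob \<and> tauY_inv q \<in> Ob"
    and nolim: "\<And>a. \<bar>a\<bar> < sqrt (k+2) \<Longrightarrow> \<not> a islimpt (fst ` Ob)"
  shows "finite (fst ` Ob)"
proof -
  define s where "s = sqrt (k+2)"
  have s0: "0 < s" unfolding s_def using k by simp
  have ss: "s^2 = k + 2" unfolding s_def using k by simp
  have s2: "s < 2"
  proof -
    have h: "s^2 < 2^2" unfolding ss using k by simp
    show ?thesis by (rule power2_less_imp_less[OF h]) simp
  qed
  let ?X = "fst ` Ob"
  have finr: "finite (?X \<inter> {-r..r})" if r: "r < s" for r
  proof -
    have "finite ({-r..r} \<inter> ?X)"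
    proof (rule finite_not_islimpt_in_compact)
      show "compact {-r..r}" by simp
      fix z assume "z \<in> {-r..r}"
      hence "\<bar>z\<bar> < sqrt (k+2)" using r s_def by auto
      thus "\<not> z islimpt ?X" by (rule nolim)
    qed
    thus ?thesis by (simp add: Int_commute)
  qed
  define F where "F = ?X \<inter> {-(s/2)..s/2}"
  have fF: "finite F" unfolding F_def by (rule finr) (use s0 in simp)
  define \<mu> where "\<mu> = Min (insert (s/2) (abs ` (F - {0})))"
  have mu0: "\<mu> > 0" unfolding \<mu>_def using fF s0 by (subst Min_gr_iff) auto
  have mus: "\<mu> \<le> s/2" unfolding \<mu>_def using fF by (intro Min_le) auto
  have muF: "\<mu> \<le> \<bar>u\<bar>" if "u \<in> F" "u \<noteq> 0" for u
    unfolding \<mu>_def using fF that by (intro Min_le) auto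
  define \<eta> where "\<eta> = (\<mu>/3)^2 * (1 - s/2) / (4 * s)"
  have eta0: "\<eta> > 0" unfolding \<eta>_def using mu0 s0 s2 by simp
  have etas: "\<eta> < s"
  proof -
    have "(\<mu>/3)^2 \<le> (s/2)^2" using mu0 mus by (intro power_mono) auto
    moreover have "(1 - s/2) \<le> 1" using s0 by simp
    ultimately have "(\<mu>/3)^2 * (1 - s/2) \<le> (s/2)^2 * 1"
      using s2 by (intro mult_mono) auto
    hence "\<eta> \<le> (s/2)^2 / (4 * s)" unfolding \<eta>_def using s0 by (simp add: divide_right_mono)
    also have "\<dots> = s / 16" using s0 by (simp add: power2_eq_square field_simps)
    also have "\<dots> < s" using s0 by simp
    finally show ?thesis .
  qed
  have big: "\<bar>x\<bar> = s" if p: "(x,y,z) \<in> Ob" and xb: "s - \<eta> \<le> \<bar>x\<bar>" for x y z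
  proof -
    have pE: "(x,y,z) \<in> E_k k" using p sub by blast
    have xs: "\<bar>x\<bar> \<le> s" using Ek_bounds(1)[OF pE] s_def by (simp add: sq_le_abs)
    have eq: "y^2+z^2-x*y*z = s^2 - x^2" using pE ss by (auto simp: Ek_iff)
    have "(1 - s/2) * (y^2+z^2) \<le> (1 - \<bar>x\<bar>/2) * (y^2+z^2)"
      using xs by (intro mult_right_mono) auto
    also have "\<dots> \<le> s^2 - x^2" using Q_ge[of x y z] xs s2 eq by simp
    also have "\<dots> \<le> 2 * s * \<eta>"
    proof -
      have "(s - \<eta>)^2 \<le> \<bar>x\<bar>^2" using xb etas by (intro power_mono) auto
      hence "s^2 - x^2 \<le> s^2 - (s - \<eta>)^2" by simp
      also have "\<dots> \<le> 2 * s * \<eta>" by (simp add: power2_eq_square algebra_simps)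
      finally show ?thesis .
    qed
    finally have h1: "(1 - s/2) * (y^2+z^2) \<le> 2 * s * \<eta>" .
    have "2 * s * \<eta> = (1 - s/2) * ((\<mu>/3)^2 / 2)" unfolding \<eta>_def using s0 by (simp add: field_simps)
    with h1 have "(1 - s/2) * (y^2+z^2) \<le> (1 - s/2) * ((\<mu>/3)^2 / 2)" by simp
    hence "y^2+z^2 \<le> (\<mu>/3)^2 / 2" using s2 by (simp add: mult_le_cancel_left_pos)
    also have "\<dots> < (\<mu>/3)^2" using mu0 by simp
    finally have yz: "y^2 + z^2 < (\<mu>/3)^2" .
    have ay: "\<bar>y\<bar> < \<mu>/3"
    proof -
      have h: "\<bar>y\<bar>^2 < (\<mu>/3)^2" unfolding power2_abs using yz zero_le_power2[of z] by linarith
      show ?thesis by (rule power2_less_imp_less[OF h]) (use mu0 in simp)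
    qed
    have az: "\<bar>z\<bar> < \<mu>/3"
    proof -
      have h: "\<bar>z\<bar>^2 < (\<mu>/3)^2" unfolding power2_abs using yz zero_le_power2[of y] by linarith
      show ?thesis by (rule power2_less_imp_less[OF h]) (use mu0 in simp)
    qed
    have "tauY (x,y,z) \<in> Ob" using inv p by blast
    hence "fst (tauY (x,y,z)) \<in> ?X" by (rule imageI)
    hence "z \<in> ?X" by (simp add: tauY_def)
    moreover have "\<bar>z\<bar> \<le> s/2" using az mus by simp
    ultimately have "z \<in> F" unfolding F_def by (auto simp: abs_le_iff)
    have z0: "z = 0"
    proof (rule ccontr)
      assume "z \<noteq> 0"
      hence "\<mu> \<le> \<bar>z\<bar>" by (rule muF[OF \<open>z \<in> F\<close>])
      thus False using az mu0 by linarith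
    qed
    have "tauY_inv (x,y,z) \<in> Ob" using inv p by blast
    hence "fst (tauY_inv (x,y,z)) \<in> ?X" by (rule imageI)
    hence "y*x - z \<in> ?X" by (simp add: tauY_inv_def)
    hence yxX: "y * x \<in> ?X" using z0 by simp
    have "\<bar>y * x\<bar> \<le> \<mu>/3 * 2"
      unfolding abs_mult using ay xs s2 by (intro mult_mono) auto
    hence yxm: "\<bar>y * x\<bar> < \<mu>" using mu0 by simp
    hence "\<bar>y * x\<bar> \<le> s/2" using mus by simp
    hence "y * x \<in> F" unfolding F_def using yxX by (auto simp: abs_le_iff)
    hence "y * x = 0" using muF[of "y*x"] yxm by linarith
    moreover have "x \<noteq> 0" using xb etas by auto
    ultimately have y0: "y = 0" by simp
    have "x^2 = s^2" using eq y0 z0 by simp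
    hence "\<bar>x\<bar>^2 = s^2" by simp
    thus ?thesis by (rule power2_eq_imp_eq) (use s0 in auto)
  qed
  have "?X \<subseteq> (?X \<inter> {-(s-\<eta>)..s-\<eta>}) \<union> {s, -s}"
  proof
    fix u assume u: "u \<in> ?X"
    then obtain q0 where "q0 \<in> Ob" "fst q0 = u" by blast
    then obtain y z where p: "(u,y,z) \<in> Ob" by (metis prod.collapse)
    show "u \<in> (?X \<inter> {-(s-\<eta>)..s-\<eta>}) \<union> {s, -s}"
    proof (cases "\<bar>u\<bar> \<le> s - \<eta>")
      case True thus ?thesis using u by (auto simp: abs_le_iff)
    next
      case False
      hence "\<bar>u\<bar> = s" using big[OF p] by simp
      thus ?thesis by (auto simp: abs_if split: if_splits)
    qed
  qed
  moreover have "finite ((?X \<inter> {-(s-\<eta>)..s-\<eta>}) \<union> {s, -s})"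
    using finr[of "s - \<eta>"] eta0 by simp
  ultimately show ?thesis by (rule finite_subset)
qed

lemma fin_all:
  assumes sub: "Ob \<subseteq> E_k k" and f1: "finite (fst ` Ob)" and f2: "finite (fst ` (sw ` Ob))"
  shows "finite Ob"
proof -
  define g where "g = (\<lambda>(x::real, y::real, b::bool). (x, y,
      (x*y + (if b then 1 else -1) * sqrt ((x*y)^2 - 4*(x^2+y^2-2-k))) / 2))"
  have "Ob \<subseteq> g ` (fst ` Ob \<times> fst ` (sw ` Ob) \<times> UNIV)"
  proof
    fix p assume p: "p \<in> Ob"
    obtain x y z where pp: "p = (x,y,z)" by (cases p)
    have eq: "x^2+y^2+z^2-x*y*z-2 = k" using p sub pp by (auto simp: Ek_iff)
    have h: "(2*z - x*y)^2 = (x*y)^2 - 4*(x^2+y^2-2-k)" using eq by (simp add: power2_eq_square algebra_simps)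
    have sq: "sqrt ((x*y)^2 - 4*(x^2+y^2-2-k)) = \<bar>2*z - x*y\<bar>" unfolding h[symmetric] by (rule real_sqrt_abs)
    have "fst p \<in> fst ` Ob" using p by (rule imageI)
    hence xin: "x \<in> fst ` Ob" using pp by simp
    have "sw p \<in> sw ` Ob" using p by (rule imageI)
    hence "fst (sw p) \<in> fst ` (sw ` Ob)" by (rule imageI)
    hence yin: "y \<in> fst ` (sw ` Ob)" using pp by simp
    show "p \<in> g ` (fst ` Ob \<times> fst ` (sw ` Ob) \<times> UNIV)"
    proof (rule image_eqI[where x="(x, y, 2*z - x*y \<ge> 0)"])
      show "p = g (x, y, 2*z - x*y \<ge> 0)" unfolding pp g_def prod.case sq by (auto simp: abs_if)
      show "(x, y, 2*z - x*y \<ge> 0) \<in> fst ` Ob \<times> fst ` (sw ` Ob) \<times> UNIV" using xin yin by simp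
    qed
  qed
  moreover have "finite (g ` (fst ` Ob \<times> fst ` (sw ` Ob) \<times> UNIV))" using f1 f2 by simp
  ultimately show ?thesis by (rule finite_subset)
qed

lemma sw_cont: "continuous_on UNIV sw"
  unfolding sw_def by (intro continuous_intros)

lemma sw_image: "sw ` C = sw -` C"
proof (rule set_eqI, rule iffI)
  fix x assume "x \<in> sw ` C" then show "x \<in> sw -` C" by auto
next
  fix x assume "x \<in> sw -` C" hence "sw x \<in> C" by simp
  hence "sw (sw x) \<in> sw ` C" by (rule imageI)
  thus "x \<in> sw ` C" by simp
qed

lemma sw_closed: "closed C \<Longrightarrow> closed (sw ` C)"
  unfolding sw_image by (rule closed_vimage[OF _ sw_cont])

definition inv4 :: "(real \<times> real \<times> real) set \<Rightarrow> bool" where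
  "inv4 C \<longleftrightarrow> (\<forall>q\<in>C. tauX q \<in> C \<and> tauX_inv q \<in> C \<and> tauY q \<in> C \<and> tauY_inv q \<in> C)"

lemma tauX_sw: "tauX q = sw (tauY (sw q))" by (simp add: tauY_sw)
lemma tauXi_sw: "tauX_inv q = sw (tauY_inv (sw q))" by (simp add: tauYi_sw)

lemma inv4_sw: assumes "inv4 C" shows "inv4 (sw ` C)"
  unfolding inv4_def
proof
  fix q assume "q \<in> sw ` C"
  then obtain c where c: "c \<in> C" "q = sw c" by blast
  have "tauX q = sw (tauY c)" "tauX_inv q = sw (tauY_inv c)"
       "tauY q = sw (tauX c)" "tauY_inv q = sw (tauX_inv c)"
    using c by (simp_all add: tauY_sw tauYi_sw)
  moreover have "tauY c \<in> C" "tauY_inv c \<in> C" "tauX c \<in> C" "tauX_inv c \<in> C"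
    using assms c unfolding inv4_def by blast+
  ultimately show "tauX q \<in> sw ` C \<and> tauX_inv q \<in> sw ` C \<and> tauY q \<in> sw ` C \<and> tauY_inv q \<in> sw ` C"
    by auto
qed

lemma sw_sub: "C \<subseteq> E_k k \<Longrightarrow> sw ` C \<subseteq> E_k k"
  using sw_Ek by blast

lemma limpt_interval:
  fixes c r :: real
  assumes "\<bar>c\<bar> < r" "{-r..r} \<subseteq> S"
  shows "c islimpt S"
  unfolding islimpt_approachable
proof (intro allI impI)
  fix e :: real assume e: "e > 0"
  define d where "d = min (e/2) (r - \<bar>c\<bar>)"
  have d0: "d > 0" "d < e" "d \<le> r - \<bar>c\<bar>" using e assms unfolding d_def by auto
  define c' where "c' = (if c \<le> 0 then c + d else c - d)"
  have dd: "c \<le> 0 \<Longrightarrow> d \<le> r + c" "c > 0 \<Longrightarrow> d \<le> r - c" using d0(3) by auto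
  have cr: "-r < c" "c < r" using assms(1) by auto
  have "c' \<in> {-r..r}" using d0 dd cr unfolding c'_def by auto
  moreover have "c' \<noteq> c" "dist c' c < e" using d0 unfolding c'_def dist_real_def by auto
  ultimately show "\<exists>x'\<in>S. x' \<noteq> c \<and> dist x' c < e" using assms by blast
qed

lemma th0: "th 0 = pi/2" by (simp add: th_def)
lemma Rk0: "-2 < k \<Longrightarrow> Rk k 0 = sqrt (k+2)" by (simp add: Rk_def)

lemma fill:
  assumes k: "-2 < k" "k < 2" and cl: "closed C" and sub: "C \<subseteq> E_k k" and inv: "inv4 C"
    and a: "\<bar>a\<bar> < sqrt (k+2)" and sl: "\<And>t. P k a t \<in> C"
  shows "E_k k \<subseteq> C"
proof -
  define s where "s = sqrt (k+2)"
  have s0: "0 < s" unfolding s_def using k by simp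
  have ss: "s^2 = k + 2" unfolding s_def using k by simp
  have s2: "s < 2"
  proof -
    have h: "s^2 < 2^2" unfolding ss using k by simp
    show ?thesis by (rule power2_less_imp_less[OF h]) simp
  qed
  have invX: "\<forall>q\<in>C. tauX q \<in> C \<and> tauX_inv q \<in> C" using inv unfolding inv4_def by blast
  have inv': "inv4 (sw ` C)" by (rule inv4_sw[OF inv])
  have invX': "\<forall>q\<in>sw ` C. tauX q \<in> sw ` C \<and> tauX_inv q \<in> sw ` C" using inv' unfolding inv4_def by blast
  have cl': "closed (sw ` C)" by (rule sw_closed[OF cl])
  have sub': "sw ` C \<subseteq> E_k k" by (rule sw_sub[OF sub])
  have aa: "\<bar>a\<bar> < 2" using a s2 s_def by simp
  have a2: "a^2 < k + 2"
  proof -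
    have "\<bar>a\<bar>^2 < s^2" using a s_def by (intro power_strict_mono) auto
    thus ?thesis using ss by simp
  qed
  define R where "R = Rk k a"
  have R0: "R > 0" unfolding R_def Rk_def using a2 th_facts(2,3)[OF aa] by simp
  have "{-R..R} \<subseteq> fst ` (sw ` C)"
  proof
    fix b assume b: "b \<in> {-R..R}"
    define t where "t = arcsin (b / R)"
    have "-1 \<le> b/R" "b/R \<le> 1" using b R0 by (auto simp: field_simps)
    hence "sin t = b / R" unfolding t_def by simp
    hence "R * sin t = b" using R0 by simp
    hence "fst (sw (P k a t)) = b" unfolding P_def R_def by simp
    moreover have "sw (P k a t) \<in> sw ` C" using sl[of t] by (rule imageI)
    hence "fst (sw (P k a t)) \<in> fst ` (sw ` C)" by (rule imageI)
    ultimately show "b \<in> fst ` (sw ` C)" by simp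
  qed
  hence "0 islimpt fst ` (sw ` C)" using R0 by (intro limpt_interval[of 0 R]) auto
  hence sl0: "P k 0 t \<in> sw ` C" for t
    using slice_in[OF k cl' sub' invX'] by simp
  have P0: "sw (P k 0 t) = (s * sin t, 0, s * cos t)" for t
    unfolding P_def th0 Rk0[OF k(1)] s_def by (simp add: sin_add)
  have swP0: "(s * sin t, 0, s * cos t) \<in> C" for t
  proof -
    have "sw (P k 0 t) \<in> sw ` (sw ` C)" using sl0[of t] by blast
    thus ?thesis using P0[of t] by (simp add: image_image)
  qed
  have "{-s..s} \<subseteq> fst ` C"
  proof
    fix b assume b: "b \<in> {-s..s}"
    define t where "t = arcsin (b / s)"
    have "-1 \<le> b/s" "b/s \<le> 1" using b s0 by (auto simp: field_simps)
    hence "sin t = b / s" unfolding t_def by simp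
    hence "s * sin t = b" using s0 by simp
    moreover have "fst (s * sin t, 0::real, s * cos t) \<in> fst ` C" using swP0[of t] by (rule imageI)
    ultimately show "b \<in> fst ` C" by simp
  qed
  hence inner: "P k x t \<in> C" if "\<bar>x\<bar> < s" for x t
  proof -
    have "x islimpt fst ` C" using that \<open>{-s..s} \<subseteq> fst ` C\<close> by (rule limpt_interval)
    moreover have "\<bar>x\<bar> < 2" using that s2 by simp
    ultimately show ?thesis using slice_in[OF k cl sub invX] by blast
  qed
  have pole1: "(s, 0, 0) \<in> C"
  proof -
    have "(0, 0, s) \<in> C" using swP0[of 0] by simp
    hence "tauY (0,0,s) \<in> C" using inv unfolding inv4_def by blast
    thus ?thesis by (simp add: tauY_def)
  qed
  have pole2: "(-s, 0, 0) \<in> C"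
  proof -
    have "(0, 0, -s) \<in> C" using swP0[of pi] by simp
    hence "tauY (0,0,-s) \<in> C" using inv unfolding inv4_def by blast
    thus ?thesis by (simp add: tauY_def)
  qed
  show ?thesis
  proof
    fix p assume p: "p \<in> E_k k"
    obtain x y z where pp: "p = (x,y,z)" by (cases p)
    have pE: "(x,y,z) \<in> E_k k" using p pp by simp
    obtain t where t: "(x,y,z) = P k x t" using P_surj[OF pE k] by blast
    have x2: "\<bar>x\<bar> \<le> s" using Ek_bounds(1)[OF pE] s_def by (simp add: sq_le_abs)
    show "p \<in> C"
    proof (cases "\<bar>x\<bar> < s")
      case True thus ?thesis using inner pp t by simp
    next
      case False
      hence xs: "\<bar>x\<bar> = s" using x2 by linarith
      hence "\<bar>x\<bar>^2 = s^2" by simp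
      hence "x^2 = k + 2" using ss by simp
      hence "Rk k x = 0" unfolding Rk_def by simp
      hence "p = (x, 0, 0)" using pp t unfolding P_def by simp
      thus ?thesis using xs pole1 pole2 by (auto simp: abs_if split: if_splits)
    qed
  qed
qed

lemma Ek_closed: "closed (E_k k)"
proof -
  have "E_k k = {p. -2 \<le> fst p \<and> fst p \<le> 2 \<and> -2 \<le> fst (snd p) \<and> fst (snd p) \<le> 2
     \<and> -2 \<le> snd (snd p) \<and> snd (snd p) \<le> 2 \<and> -2 \<le> k \<and> k \<le> 2
     \<and> (fst p)^2 + (fst (snd p))^2 + (snd (snd p))^2 - fst p * fst (snd p) * snd (snd p) - 2 = k}"
  proof (rule set_eqI)
    fix p :: "real \<times> real \<times> real"
    obtain x y z where "p = (x,y,z)" by (cases p)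
    thus "p \<in> E_k k \<longleftrightarrow> p \<in> {p. -2 \<le> fst p \<and> fst p \<le> 2 \<and> -2 \<le> fst (snd p) \<and> fst (snd p) \<le> 2
     \<and> -2 \<le> snd (snd p) \<and> snd (snd p) \<le> 2 \<and> -2 \<le> k \<and> k \<le> 2
     \<and> (fst p)^2 + (fst (snd p))^2 + (snd (snd p))^2 - fst p * fst (snd p) * snd (snd p) - 2 = k}"
      by (simp only: Ek_iff mem_Collect_eq fst_conv snd_conv)
  qed
  also have "closed \<dots>"
    by (intro closed_Collect_conj closed_Collect_le closed_Collect_eq closed_Collect_const continuous_intros)
  finally show ?thesis .
qed

lemma tauX_fun: "tauX = (\<lambda>p. (fst p, snd (snd p), fst p * snd (snd p) - fst (snd p)))"
  by (rule ext) (auto simp: tauX_def split: prod.splits)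
lemma tauXi_fun: "tauX_inv = (\<lambda>p. (fst p, fst p * fst (snd p) - snd (snd p), fst (snd p)))"
  by (rule ext) (auto simp: tauX_inv_def split: prod.splits)
lemma tauY_fun: "tauY = (\<lambda>p. (snd (snd p), fst (snd p), fst (snd p) * snd (snd p) - fst p))"
  by (rule ext) (auto simp: tauY_def split: prod.splits)
lemma tauYi_fun: "tauY_inv = (\<lambda>p. (fst (snd p) * fst p - snd (snd p), fst (snd p), fst p))"
  by (rule ext) (auto simp: tauY_inv_def split: prod.splits)

lemma conts: "continuous_on UNIV tauX" "continuous_on UNIV tauX_inv"
  "continuous_on UNIV tauY" "continuous_on UNIV tauY_inv"
  unfolding tauX_fun tauXi_fun tauY_fun tauYi_fun by (intro continuous_intros)+

lemma closure_inv:
  assumes f: "continuous_on UNIV f" and inv: "\<forall>q\<in>Ob. f q \<in> Ob"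
  shows "\<forall>q\<in>closure Ob. f q \<in> closure Ob"
proof -
  have "f ` closure Ob \<subseteq> closure Ob"
  proof (rule image_closure_subset)
    show "continuous_on (closure Ob) f" using f by (rule continuous_on_subset) simp
    show "closed (closure Ob)" by simp
    show "f ` Ob \<subseteq> closure Ob" using inv closure_subset by blast
  qed
  thus ?thesis by blast
qed

lemma inv4_closure: assumes "inv4 Ob" shows "inv4 (closure Ob)"
proof -
  have "\<forall>q\<in>Ob. tauX q \<in> Ob" "\<forall>q\<in>Ob. tauX_inv q \<in> Ob" "\<forall>q\<in>Ob. tauY q \<in> Ob" "\<forall>q\<in>Ob. tauY_inv q \<in> Ob"
    using assms unfolding inv4_def by blast+
  from closure_inv[OF conts(1) this(1)] closure_inv[OF conts(2) this(2)]
       closure_inv[OF conts(3) this(3)] closure_inv[OF conts(4) this(4)]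
  show ?thesis unfolding inv4_def by blast
qed

lemma orbit_sub:
  assumes "p0 \<in> E_k k" "-2 < k" "k < 2"
  shows "Gamma_orbit p0 \<subseteq> E_k k"
proof
  fix q assume "q \<in> Gamma_orbit p0"
  thus "q \<in> E_k k"
  proof (induction rule: Gamma_orbit.induct)
    case base then show ?case using assms(1) .
  next
    case (stepX q) then show ?case using tauX_Ek(1) assms(2,3) by blast
  next
    case (stepY q) then show ?case using tauY_Ek(1) assms(2,3) by blast
  next
    case (stepXi q) then show ?case using tauX_Ek(2) assms(2,3) by blast
  next
    case (stepYi q) then show ?case using tauY_Ek(2) assms(2,3) by blast
  qed
qed

lemma orbit_inv: "inv4 (Gamma_orbit p0)"
  unfolding inv4_def by (blast intro: Gamma_orbit.intros)

theorem proposition4p2: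
  fixes k :: real and p0 :: "real \<times> real \<times> real"
  assumes "-2 < k" and "k < 2"
    and "p0 \<in> E_k k"
    and "infinite (Gamma_orbit p0)"
  shows "E_k k \<subseteq> closure (Gamma_orbit p0)"
proof -
  note k = assms(1,2)
  define Ob where "Ob = Gamma_orbit p0"
  define C where "C = closure Ob"
  have subO: "Ob \<subseteq> E_k k" unfolding Ob_def by (rule orbit_sub[OF assms(3) k])
  have invO: "inv4 Ob" unfolding Ob_def by (rule orbit_inv)
  have clC: "closed C" unfolding C_def by simp
  have subC: "C \<subseteq> E_k k" unfolding C_def using subO Ek_closed by (rule closure_minimal)
  have invC: "inv4 C" unfolding C_def by (rule inv4_closure[OF invO])
  have OC: "Ob \<subseteq> C" unfolding C_def by (rule closure_subset)
  have s2: "sqrt (k+2) < 2"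
  proof -
    have h: "sqrt (k+2)^2 < 2^2" using k by simp
    show ?thesis by (rule power2_less_imp_less[OF h]) simp
  qed
  have main: "E_k k \<subseteq> C"
  proof (cases "\<exists>a. \<bar>a\<bar> < sqrt (k+2) \<and> a islimpt fst ` Ob")
    case True
    then obtain a where a: "\<bar>a\<bar> < sqrt (k+2)" "a islimpt fst ` Ob" by blast
    have "a islimpt fst ` C" using a(2) OC by (rule islimpt_subset[OF _ image_mono])
    moreover have "\<bar>a\<bar> < 2" using a(1) s2 by simp
    moreover have "\<forall>q\<in>C. tauX q \<in> C \<and> tauX_inv q \<in> C" using invC unfolding inv4_def by blast
    ultimately have "\<And>t. P k a t \<in> C" using slice_in[OF k clC subC] by blast
    thus ?thesis by (rule fill[OF k clC subC invC a(1)])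
  next
    case F1: False
    show ?thesis
    proof (cases "\<exists>a. \<bar>a\<bar> < sqrt (k+2) \<and> a islimpt fst ` (sw ` Ob)")
      case True
      then obtain a where a: "\<bar>a\<bar> < sqrt (k+2)" "a islimpt fst ` (sw ` Ob)" by blast
      have clC': "closed (sw ` C)" by (rule sw_closed[OF clC])
      have subC': "sw ` C \<subseteq> E_k k" by (rule sw_sub[OF subC])
      have invC': "inv4 (sw ` C)" by (rule inv4_sw[OF invC])
      have "a islimpt fst ` (sw ` C)" using a(2) image_mono[OF OC, of sw]
        by (rule islimpt_subset[OF _ image_mono])
      moreover have "\<bar>a\<bar> < 2" using a(1) s2 by simp
      moreover have "\<forall>q\<in>sw ` C. tauX q \<in> sw ` C \<and> tauX_inv q \<in> sw ` C" using invC' unfolding inv4_def by blast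
      ultimately have "\<And>t. P k a t \<in> sw ` C" using slice_in[OF k clC' subC'] by blast
      hence E': "E_k k \<subseteq> sw ` C" by (rule fill[OF k clC' subC' invC' a(1)])
      show ?thesis
      proof
        fix p assume "p \<in> E_k k"
        hence "sw p \<in> E_k k" by (simp add: sw_Ek)
        hence "sw p \<in> sw ` C" using E' by blast
        then obtain c where "c \<in> C" "sw p = sw c" by blast
        hence "sw (sw p) = sw (sw c)" by simp
        thus "p \<in> C" using \<open>c \<in> C\<close> by simp
      qed
    next
      case F2: False
      have invY: "\<forall>q\<in>Ob. tauY q \<in> Ob \<and> tauY_inv q \<in> Ob" using invO unfolding inv4_def by blast
      have f1: "finite (fst ` Ob)" using fin_x[OF k subO invY] F1 by blast
      have invO': "inv4 (sw ` Ob)" by (rule inv4_sw[OF invO])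
      have invY': "\<forall>q\<in>sw ` Ob. tauY q \<in> sw ` Ob \<and> tauY_inv q \<in> sw ` Ob" using invO' unfolding inv4_def by blast
      have f2: "finite (fst ` (sw ` Ob))" using fin_x[OF k sw_sub[OF subO] invY'] F2 by blast
      have "finite Ob" by (rule fin_all[OF subO f1 f2])
      hence False using assms(4) unfolding Ob_def by simp
      thus ?thesis ..
    qed
  qed
  thus ?thesis unfolding C_def Ob_def .
qed

end
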